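(* Let $A$ be a vector space with bilinear operations $\star,[-,-]$, and $x\cdot y=x\star y+y\star x$. (1) If $(A,\cdot,[-,-])$ is a transposed Poisson algebra, $(A,\star)$ is anti-Zinbiel, and $(-\mathcal{L}_{\star},\mathrm{ad},A)$ is a representation of the transposed Poisson algebra $(A,\cdot,[-,-])$, then $(A,\star,[-,-])$ is a TALO algebra, i.e. $x\star[y,z]=[x,y]\star z=[x,y\star z]=0$ for all $x,y,z$. (2) Conversely, if $(A,\star,[-,-])$ is a TALO algebra, then $(A,\cdot,[-,-])$ is a transposed Poisson algebra with representation $(-\mathcal{L}_{\star},\mathrm{ad},A)$.
   Context: Finite-dimensional spaces, characteristic zero. $\mathcal{L}_\star(x)y=x\star y$, $\mathrm{ad}(x)y=[x,y]$. Anti-Zinbiel: $x\star(y\star z)=-(x\star y+y\star x)\star z=x\star(z\star y)$. Transposed Poisson algebra: $(A,\cdot)$ commutative associative, $(A,[-,-])$ Lie, $2z\cdot[x,y]=[z\cdot x,y]+[x,z\cdot y]$. A representation of a transposed Poisson algebra is $(\mu,\rho,V)$ with $\mu(x\cdot y)=\mu(x)\mu(y)$, $\rho([x,y])=[\rho(x),\rho(y)]$, $2\mu(x)\rho(y)=\rho(x\cdot y)+\rho(y)\mu(x)$, $2\mu([x,y])=\rho(x)\mu(y)-\rho(y)\mu(x)$. A TALO algebra is $(A,\star,[-,-])$ with $(A,\star)$ anti-Zinbiel, $(A,[-,-])$ Lie, and $x\star[y,z]=[x,y]\star z=[x,y\star z]=0$ for all $x,y,z$. *)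

theory Defs
  imports Complex_Main
begin

text \<open>A is the carrier type 'a, a vector space over a field 'k of characteristic zero
  with scalar multiplication scale. All definitions are relative to this scalar multiplication.\<close>

definition bilinear_op :: "('k::field \<Rightarrow> 'a::ab_group_add \<Rightarrow> 'a) \<Rightarrow> ('a \<Rightarrow> 'a \<Rightarrow> 'a) \<Rightarrow> bool" where
  "bilinear_op scale m \<longleftrightarrow>
     (\<forall>y. Vector_Spaces.linear scale scale (\<lambda>x. m x y)) \<and>
     (\<forall>x. Vector_Spaces.linear scale scale (\<lambda>y. m x y))"

definition fin_dim :: "('k::field \<Rightarrow> 'a::ab_group_add \<Rightarrow> 'a) \<Rightarrow> bool" where
  "fin_dim scale \<longleftrightarrow> (\<exists>B. finite B \<and> module.span scale B = UNIV)"

definition anti_zinbiel :: "('a::ab_group_add \<Rightarrow> 'a \<Rightarrow> 'a) \<Rightarrow> bool" where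
  "anti_zinbiel st \<longleftrightarrow> (\<forall>x y z.
      st x (st y z) = - st (st x y + st y x) z \<and> st x (st y z) = st x (st z y))"

definition lie_alg :: "('k::field \<Rightarrow> 'a::ab_group_add \<Rightarrow> 'a) \<Rightarrow> ('a \<Rightarrow> 'a \<Rightarrow> 'a) \<Rightarrow> bool" where
  "lie_alg scale br \<longleftrightarrow> bilinear_op scale br \<and> (\<forall>x. br x x = 0) \<and>
     (\<forall>x y z. br x (br y z) + br y (br z x) + br z (br x y) = 0)"

definition comm_assoc_alg :: "('k::field \<Rightarrow> 'a::ab_group_add \<Rightarrow> 'a) \<Rightarrow> ('a \<Rightarrow> 'a \<Rightarrow> 'a) \<Rightarrow> bool" where
  "comm_assoc_alg scale m \<longleftrightarrow> bilinear_op scale m \<and> (\<forall>x y. m x y = m y x) \<and>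
     (\<forall>x y z. m (m x y) z = m x (m y z))"

definition transposed_poisson :: "('k::field \<Rightarrow> 'a::ab_group_add \<Rightarrow> 'a) \<Rightarrow> ('a \<Rightarrow> 'a \<Rightarrow> 'a) \<Rightarrow> ('a \<Rightarrow> 'a \<Rightarrow> 'a) \<Rightarrow> bool" where
  "transposed_poisson scale dot br \<longleftrightarrow> comm_assoc_alg scale dot \<and> lie_alg scale br \<and>
     (\<forall>x y z. scale 2 (dot z (br x y)) = br (dot z x) y + br x (dot z y))"

definition tp_representation ::
  "('k::field \<Rightarrow> 'a::ab_group_add \<Rightarrow> 'a) \<Rightarrow> ('k \<Rightarrow> 'v::ab_group_add \<Rightarrow> 'v) \<Rightarrow>
   ('a \<Rightarrow> 'a \<Rightarrow> 'a) \<Rightarrow> ('a \<Rightarrow> 'a \<Rightarrow> 'a) \<Rightarrow> ('a \<Rightarrow> 'v \<Rightarrow> 'v) \<Rightarrow> ('a \<Rightarrow> 'v \<Rightarrow> 'v) \<Rightarrow> bool" where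
  "tp_representation scaleA scaleV dot br mu rho \<longleftrightarrow>
     (\<forall>x. Vector_Spaces.linear scaleV scaleV (mu x)) \<and>
     (\<forall>x. Vector_Spaces.linear scaleV scaleV (rho x)) \<and>
     (\<forall>v. Vector_Spaces.linear scaleA scaleV (\<lambda>x. mu x v)) \<and>
     (\<forall>v. Vector_Spaces.linear scaleA scaleV (\<lambda>x. rho x v)) \<and>
     (\<forall>x y. mu (dot x y) = mu x \<circ> mu y) \<and>
     (\<forall>x y. rho (br x y) = (\<lambda>v. rho x (rho y v) - rho y (rho x v))) \<and>
     (\<forall>x y v. scaleV 2 (mu x (rho y v)) = rho (dot x y) v + rho y (mu x v)) \<and>
     (\<forall>x y v. scaleV 2 (mu (br x y) v) = rho x (mu y v) - rho y (mu x v))"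

definition TALO :: "('k::field \<Rightarrow> 'a::ab_group_add \<Rightarrow> 'a) \<Rightarrow> ('a \<Rightarrow> 'a \<Rightarrow> 'a) \<Rightarrow> ('a \<Rightarrow> 'a \<Rightarrow> 'a) \<Rightarrow> bool" where
  "TALO scale st br \<longleftrightarrow> anti_zinbiel st \<and> lie_alg scale br \<and>
     (\<forall>x y z. st x (br y z) = 0 \<and> st (br x y) z = 0 \<and> br x (st y z) = 0)"

end

theory Submission
  imports Defs
begin

lemma additive_facts:
  fixes f :: "'a::ab_group_add \<Rightarrow> 'b::ab_group_add"
  assumes "\<And>x y. f (x + y) = f x + f y"
  shows "f 0 = 0" "f (- x) = - f x" "f (x - y) = f x - f y"
proof -
  have "f (0 + 0) = f 0 + f 0" by (rule assms)
  then show z: "f 0 = 0" by simp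
  have "f (x + - x) = f x + f (- x)" by (rule assms)
  with z show n: "f (- x) = - f x" by (simp add: eq_neg_iff_add_eq_0 add.commute)
  have "f (x + - y) = f x + f (- y)" by (rule assms)
  then show "f (x - y) = f x - f y"
    using assms[of y "-y"] z by (simp add: eq_neg_iff_add_eq_0 add.commute flip: diff_conv_add_uminus)
qed

lemma bil_facts:
  fixes scale :: "'k::field \<Rightarrow> 'a::ab_group_add \<Rightarrow> 'a"
  assumes "bilinear_op scale m"
  shows "m (x+y) z = m x z + m y z" "m x (y+z) = m x y + m x z"
    "m (-x) z = - m x z" "m x (-z) = - m x z" "m 0 z = 0" "m x 0 = 0"
    "m (scale c x) z = scale c (m x z)" "m x (scale c z) = scale c (m x z)"
proof -
  have L: "\<And>y x1 x2. m (x1+x2) y = m x1 y + m x2 y" and R: "\<And>x y1 y2. m x (y1+y2) = m x y1 + m x y2"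
    and "\<And>y c x. m (scale c x) y = scale c (m x y)" "\<And>x c y. m x (scale c y) = scale c (m x y)"
    using assms unfolding bilinear_op_def Vector_Spaces.linear_iff by auto
  then show "m (scale c x) z = scale c (m x z)" "m x (scale c z) = scale c (m x z)" by auto
  show "m (x+y) z = m x z + m y z" "m x (y+z) = m x y + m x z" by (rule L, rule R)
  show "m (-x) z = - m x z" "m 0 z = 0"
    using additive_facts[of "\<lambda>x. m x z", OF L] by auto
  show "m x (-z) = - m x z" "m x 0 = 0"
    using additive_facts[of "\<lambda>z. m x z", OF R] by auto
qed

lemma lie_antisym:
  assumes "lie_alg scale br" shows "br x y = - br y x"
proof -
  have b: "bilinear_op scale br" and z: "\<And>x. br x x = 0" using assms unfolding lie_alg_def by auto
  have "br (x+y) (x+y) = 0" by (rule z)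
  then have "br x y + br y x = 0" using z[of x] z[of y] by (simp add: bil_facts[OF b] add.commute)
  then show ?thesis by (simp add: eq_neg_iff_add_eq_0)
qed

lemma two_scale:
  fixes scale :: "'k::field \<Rightarrow> 'a::ab_group_add \<Rightarrow> 'a"
  assumes "vector_space scale" shows "scale 2 v = v + v"
proof -
  interpret vector_space scale by fact
  have "scale (1 + 1) v = v + v" by (simp only: scale_left_distrib scale_one)
  moreover have "(1 + 1 :: 'k) = 2" by simp
  ultimately show ?thesis by simp
qed

lemma half_cancel:
  fixes scale :: "'k::field_char_0 \<Rightarrow> 'a::ab_group_add \<Rightarrow> 'a"
  assumes "vector_space scale" "v + v = (0::'a)" shows "v = 0"
proof -
  interpret vector_space scale by fact
  have "scale (1/2) (scale 2 v) = v" by simp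
  moreover have "scale 2 v = 0" using two_scale[OF assms(1)] assms(2) by simp
  ultimately show ?thesis by simp
qed

lemma third_cancel:
  fixes scale :: "'k::field_char_0 \<Rightarrow> 'a::ab_group_add \<Rightarrow> 'a"
  assumes "vector_space scale" "v + v + v = (0::'a)" shows "v = 0"
proof -
  interpret vector_space scale by fact
  have "scale (1/3) (scale 3 v) = v" by simp
  moreover have "scale (2 + 1) v = v + v + v" using two_scale[OF assms(1)]
    by (simp only: scale_left_distrib) simp
  ultimately show ?thesis using assms(2) by simp
qed

theorem mainTheorem13:
  fixes scale :: "'k::field_char_0 \<Rightarrow> 'a::ab_group_add \<Rightarrow> 'a"
    and st br :: "'a \<Rightarrow> 'a \<Rightarrow> 'a"
  assumes "vector_space scale"
    and "fin_dim scale"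
    and "bilinear_op scale st"
    and "bilinear_op scale br"
  defines "dot \<equiv> (\<lambda>x y. st x y + st y x)"
  shows "(transposed_poisson scale dot br \<and> anti_zinbiel st \<and>
          tp_representation scale scale dot br (\<lambda>x v. - st x v) br
          \<longrightarrow> TALO scale st br)
       \<and> (TALO scale st br \<longrightarrow>
          transposed_poisson scale dot br \<and>
          tp_representation scale scale dot br (\<lambda>x v. - st x v) br)"
proof (intro conjI impI)
  note S = bil_facts[OF assms(3)] and B = bil_facts[OF assms(4)]
  note two = two_scale[OF assms(1)]
  {
    assume H: "transposed_poisson scale dot br \<and> anti_zinbiel st \<and>
          tp_representation scale scale dot br (\<lambda>x v. - st x v) br"
    have lie: "lie_alg scale br" using H unfolding transposed_poisson_def by auto
    note AS = lie_antisym[OF lie]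
    have TP: "\<And>x y z. scale 2 (dot z (br x y)) = br (dot z x) y + br x (dot z y)"
      using H unfolding transposed_poisson_def by auto
    have C: "\<And>x y v. scale 2 (- st x (br y v)) = br (dot x y) v + br y (- st x v)"
      using H unfolding tp_representation_def by auto
    have D: "\<And>x y v. scale 2 (- st (br x y) v) = br x (- st y v) - br y (- st x v)"
      using H unfolding tp_representation_def by auto
    have key: "br x (st z y) + br x (st z y) + br x (st y z) = 0" for x y z
    proof -
      define p where "p = st z (br x y)"
      define q where "q = st (br x y) z"
      define a1 where "a1 = br (st z x) y"
      define a2 where "a2 = br (st x z) y"
      define b1 where "b1 = br x (st z y)"
      define b2 where "b2 = br x (st y z)"
      have E2: "- (- p + - p) = - b1 + - b2 + a1"
        using C[of z y x] AS[of y x] AS[of "st z x" y] AS[of "st z y" x] AS[of "st y z" x]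
        by (simp add: dot_def two S B p_def a1_def b1_def b2_def)
      have E3: "- q + - q = - b2 - a2"
        using D[of x y z] AS[of y "st x z"]
        by (simp add: two S B q_def a2_def b2_def)
      have E4: "(p + q) + (p + q) = a1 + a2 + (b1 + b2)"
        using TP[of z x y]
        by (simp add: dot_def two S B p_def q_def a1_def a2_def b1_def b2_def)
      have "b1 + b1 + b2 = (a1 + a2 + (b1 + b2)) + (- b2 - a2) - (- b1 + - b2 + a1)"
        by (simp add: algebra_simps)
      also have "\<dots> = 0" unfolding E4[symmetric] E3[symmetric] E2[symmetric]
        by (simp add: algebra_simps)
      finally show ?thesis by (simp add: b1_def b2_def)
    qed
    have K: "br x (st z y) = 0" for x y z
    proof -
      define b1 where "b1 = br x (st z y)"
      define b2 where "b2 = br x (st y z)"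
      have k1: "b1 + b1 + b2 = 0" unfolding b1_def b2_def by (rule key)
      have k2: "b2 + b2 + b1 = 0" unfolding b1_def b2_def by (rule key)
      have "b1 + b1 + b1 = - (b2 + b2 + b1) + (b1 + b1 + b2) + (b1 + b1 + b2)"
        by (simp add: algebra_simps)
      also have "\<dots> = 0" unfolding k1 k2 by simp
      finally show ?thesis unfolding b1_def by (rule third_cancel[OF assms(1)])
    qed
    have Q: "st (br x y) z = 0" for x y z
    proof -
      have "scale 2 (- st (br x y) z) = 0" using D[of x y z] by (simp add: K B)
      then have "- st (br x y) z + - st (br x y) z = 0" by (metis two)
      then have "- st (br x y) z = 0" by (rule half_cancel[OF assms(1)])
      then show ?thesis by simp
    qed
    have P: "st x (br y z) = 0" for x y z
    proof -
      have "scale 2 (- st x (br y z)) = 0" using C[of x y z] AS[of "st x y" z] AS[of "st y x" z]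
        by (simp add: K B dot_def)
      then have "- st x (br y z) + - st x (br y z) = 0" by (metis two)
      then have "- st x (br y z) = 0" by (rule half_cancel[OF assms(1)])
      then show ?thesis by simp
    qed
    show "TALO scale st br" unfolding TALO_def using H lie K P Q by auto
  }
  {
    assume T: "TALO scale st br"
    have lie: "lie_alg scale br" and az: "anti_zinbiel st"
      and Z1: "\<And>x y z. st x (br y z) = 0" and Z2: "\<And>x y z. st (br x y) z = 0"
      and Z3: "\<And>x y z. br x (st y z) = 0"
      using T unfolding TALO_def by auto
    note AS = lie_antisym[OF lie]
    have Z4: "br (st y z) x = 0" for x y z using AS[of "st y z" x] Z3[of x y z] by simp
    have A1: "st x (st y z) = - st (st x y + st y x) z" and A2: "st x (st y z) = st x (st z y)" for x y z
      using az unfolding anti_zinbiel_def by blast+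
    have F1: "st x (st y z) = st y (st x z)" for x y z
      using A1[of x y z] A1[of y x z] by (simp add: add.commute)
    interpret vector_space scale by fact
    have z2: "scale 2 (0::'a) = 0" by simp
    have ca: "comm_assoc_alg scale dot"
    proof -
      have bd: "bilinear_op scale dot"
        unfolding bilinear_op_def Vector_Spaces.linear_iff dot_def
        using assms(1) by (simp add: S scale_right_distrib algebra_simps)
      have "dot (dot x y) z = dot x (dot y z)" for x y z
      proof -
        have e1: "st (st x y) z + st (st y x) z = - st x (st y z)"
          using A1[of x y z] by (simp add: S)
        have e2: "st (st y z) x + st (st z y) x = - st y (st z x)"
          using A1[of y z x] by (simp add: S)
        have f1: "st z (st x y) = st x (st y z)" using F1[of z x y] A2[of x z y] by simp
        have f2: "st z (st y x) = st x (st y z)" using F1[of z y x] F1[of y x z] A2[of y z x] A2[of x y z] by simp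
        have f3: "st y (st z x) = st x (st y z)" using F1[of y z x] A2[of z y x] F1[of z y x] F1[of y x z] A2[of y z x] by simp
        have f4: "st x (st z y) = st x (st y z)" using A2[of x y z] by simp
        show ?thesis unfolding dot_def
          by (simp add: S add.assoc[symmetric] e1 e2 f1 f2 f3 f4)
      qed
      then show ?thesis unfolding comm_assoc_alg_def using bd by (auto simp: dot_def add.commute)
    qed
    show "transposed_poisson scale dot br"
      unfolding transposed_poisson_def using ca lie
      by (simp add: dot_def S B Z1 Z2 Z3 Z4)
    have jac: "br (br x y) v = br x (br y v) - br y (br x v)" for x y v
    proof -
      have "br x (br y v) + br y (br v x) + br v (br x y) = 0"
        using lie unfolding lie_alg_def by auto
      then show ?thesis using AS[of v "br x y"] AS[of v x] B
        by (simp add: algebra_simps)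
    qed
    show "tp_representation scale scale dot br (\<lambda>x v. - st x v) br"
      unfolding tp_representation_def Vector_Spaces.linear_iff
      using assms(1)
      by (auto simp: S B Z1 Z2 Z3 Z4 dot_def jac A1 scale_minus_right)
  }
qed

end
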